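(* For all $P,Q\in\Gamma_n$, $$0\le M_{SA}(P\|Q)\le \tfrac14 \Delta(P\|Q)\qquad\text{and}\qquad 0\le \xi_{SA}(P\|Q)\le \tfrac14\xi_{\Delta}(P\|Q).$$
   Context: $\Gamma_n=\{P=(p_1,\dots,p_n): p_i>0,\ \sum_i p_i=1\}$, $n\ge2$. For $f:(0,\infty)\to\mathbb{R}$, $C_f(P\|Q)=\sum_{i=1}^n q_i f(p_i/q_i)$; for differentiable $f$, $E_f(P\|Q)=\sum_{i=1}^n (p_i-q_i) f'(p_i/q_i)$ and $\xi_f=E_f-C_f$. With $f_{SA}(x)=\sqrt{(x^2+1)/2}-\frac{x+1}{2}$ and $f_\Delta(x)=\frac{(x-1)^2}{x+1}$: $M_{SA}=C_{f_{SA}}=\sum_i\sqrt{(p_i^2+q_i^2)/2}-1$, $\Delta=C_{f_\Delta}=\sum_i\frac{(p_i-q_i)^2}{p_i+q_i}$, $\xi_{SA}=\xi_{f_{SA}}$, $\xi_\Delta=\xi_{f_\Delta}$. *)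

theory Defs
  imports "HOL-Analysis.Analysis"
begin

definition Gamma :: "nat \<Rightarrow> (nat \<Rightarrow> real) set" where
  "Gamma n = {p. (\<forall>i<n. p i > 0) \<and> (\<Sum>i<n. p i) = 1}"

definition Cf :: "(real \<Rightarrow> real) \<Rightarrow> nat \<Rightarrow> (nat \<Rightarrow> real) \<Rightarrow> (nat \<Rightarrow> real) \<Rightarrow> real" where
  "Cf f n p q = (\<Sum>i<n. q i * f (p i / q i))"

definition Ef :: "(real \<Rightarrow> real) \<Rightarrow> nat \<Rightarrow> (nat \<Rightarrow> real) \<Rightarrow> (nat \<Rightarrow> real) \<Rightarrow> real" where
  "Ef f n p q = (\<Sum>i<n. (p i - q i) * deriv f (p i / q i))"

definition xi_f :: "(real \<Rightarrow> real) \<Rightarrow> nat \<Rightarrow> (nat \<Rightarrow> real) \<Rightarrow> (nat \<Rightarrow> real) \<Rightarrow> real" where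
  "xi_f f n p q = Ef f n p q - Cf f n p q"

definition f_SA :: "real \<Rightarrow> real" where
  "f_SA x = sqrt ((x^2 + 1) / 2) - (x + 1) / 2"

definition f_Delta :: "real \<Rightarrow> real" where
  "f_Delta x = (x - 1)^2 / (x + 1)"

definition M_SA where "M_SA = Cf f_SA"
definition Delta where "Delta = Cf f_Delta"
definition xi_SA where "xi_SA = xi_f f_SA"
definition xi_Delta where "xi_Delta = xi_f f_Delta"

end

theory Submission
  imports Defs
begin

lemma sa_basic:
  fixes x :: real assumes x: "x > 0"
  defines "s \<equiv> sqrt ((x^2 + 1) / 2)"
  shows "s^2 = (x^2+1)/2" "s \<ge> (x+1)/2" "s > 0"
proof -
  show s2: "s^2 = (x^2+1)/2" unfolding s_def by (simp add: add_pos_nonneg)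
  have "((x+1)/2)^2 \<le> (x^2+1)/2"
    using sum_squares_ge_zero[of "x-1" 0] by (simp add: power2_eq_square field_simps)
  then show "s \<ge> (x+1)/2" unfolding s_def by (rule real_le_rsqrt)
  moreover have "(x+1)/2 > 0" using x by simp
  ultimately show "s > 0" by linarith
qed

lemma deriv_SA:
  fixes x :: real assumes x: "x > 0"
  shows "deriv f_SA x = x / (2 * sqrt ((x^2 + 1) / 2)) - 1/2"
proof -
  have "0 \<le> x^2" by simp
  then have pos: "(x^2+1)/2 > 0" by (smt (verit) divide_pos_pos)
  have "(f_SA has_real_derivative
      (inverse (sqrt ((x^2 + 1) / 2)) / 2 * ((2 * x ^ 1 * 1 + 0) / 2) - (1 + 0) / 2)) (at x)"
    unfolding f_SA_def[abs_def]
    by (rule derivative_eq_intros refl | use pos in simp)+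
  then have "deriv f_SA x = inverse (sqrt ((x^2 + 1) / 2)) / 2 * ((2 * x ^ 1 * 1 + 0) / 2) - (1 + 0) / 2"
    by (rule DERIV_imp_deriv)
  then show ?thesis by (simp add: field_simps)
qed

lemma deriv_Delta:
  fixes x :: real assumes x: "x > 0"
  shows "deriv f_Delta x = (x - 1) * (x + 3) / (x + 1)^2"
proof -
  have ne: "x + 1 \<noteq> 0" using x by linarith
  have "(f_Delta has_real_derivative
     ((2 * (x-1) ^ 1 * (1 - 0)) * (x + 1) - (x-1)^2 * (1 + 0)) / ((x+1) * (x+1))) (at x)"
    unfolding f_Delta_def[abs_def]
    by (rule derivative_eq_intros refl | use ne in simp)+
  then have "deriv f_Delta x = ((2 * (x-1) ^ 1 * (1 - 0)) * (x + 1) - (x-1)^2 * (1 + 0)) / ((x+1) * (x+1))"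
    by (rule DERIV_imp_deriv)
  then show ?thesis using ne by (simp add: field_simps power2_eq_square)
qed


lemma pointwise:
  fixes x :: real assumes x: "x > 0"
  shows "0 \<le> f_SA x" "f_SA x \<le> f_Delta x / 4"
    "0 \<le> (x-1) * deriv f_SA x - f_SA x"
    "(x-1) * deriv f_SA x - f_SA x \<le> ((x-1) * deriv f_Delta x - f_Delta x) / 4"
proof -
  define s where "s = sqrt ((x^2 + 1) / 2)"
  define a where "a = (x+1)/2"
  have s2: "s^2 = (x^2+1)/2" and sa: "s \<ge> a" and sp: "s > 0"
    using sa_basic[OF x] unfolding s_def a_def by auto
  have ap: "a > 0" using x unfolding a_def by simp
  have fsa: "f_SA x = s - a" unfolding f_SA_def s_def a_def by simp
  have key: "(s-a)*(s+a) = (x-1)^2/4"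
  proof -
    have "(s-a)*(s+a) = s^2 - a^2" by (simp add: algebra_simps power2_eq_square)
    also have "... = (x-1)^2/4" unfolding s2 a_def by (simp add: field_simps power2_eq_square)
    finally show ?thesis .
  qed
  show "0 \<le> f_SA x" using fsa sa by simp
  have "(s-a)*(x+1) \<le> (s-a)*(s+a)"
    by (rule mult_left_mono) (use sa in \<open>auto simp: a_def field_simps\<close>)
  then have "(s-a)*(x+1) \<le> (x-1)^2/4" using key by simp
  then have "s - a \<le> (x-1)^2/4/(x+1)" using x by (simp add: field_simps)
  then show "f_SA x \<le> f_Delta x / 4" unfolding fsa f_Delta_def by (simp add: mult.commute)
  have gsa: "(x-1) * deriv f_SA x - f_SA x = (s-a)/s"
  proof -
    have "(x-1) * deriv f_SA x - f_SA x = (x - 1) * (x / (2 * s) - 1 / 2) - (s - a)"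
      using deriv_SA[OF x] fsa s_def by simp
    also have "... = ((x-1)*x - (x-1)* s - 2* s^2 + 2*a* s)/(2* s)"
      using sp by (simp add: field_simps power2_eq_square)
    also have "... = (2* s - 2*a)/(2* s)" unfolding s2 a_def using sp by (simp add: field_simps power2_eq_square)
    also have "... = (s-a)/s" using sp by (simp add: field_simps)
    finally show ?thesis .
  qed
  show "0 \<le> (x-1) * deriv f_SA x - f_SA x" unfolding gsa using sa sp by simp
  have gd: "(x-1) * deriv f_Delta x - f_Delta x = 2* (x-1)^2/(x+1)^2"
  proof -
    have ne: "x + 1 \<noteq> 0" using x by linarith
    show ?thesis unfolding deriv_Delta[OF x] f_Delta_def using ne
      by (simp add: divide_simps power2_eq_square) (simp add: algebra_simps)
  qed
  have "2*a^2 \<le> s* (s+a)"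
  proof -
    have "a*a \<le> s* s" using mult_mono[OF sa sa] ap sp by simp
    moreover have "a*a \<le> s*a" using mult_right_mono[OF sa] ap by simp
    ultimately show ?thesis by (simp add: power2_eq_square algebra_simps)
  qed
  then have "(s-a)*(2*a^2) \<le> (s-a)*(s*(s+a))"
    by (rule mult_left_mono) (use sa in simp)
  then have "(s-a)*(2*a^2) \<le> s*((s-a)*(s+a))" by (simp add: algebra_simps)
  then have "(s-a)*(2*a^2) \<le> s*((x-1)^2/4)" using key by simp
  then have "(s-a)*(2*(x+1)^2) \<le> s*(x-1)^2" unfolding a_def by (simp add: field_simps power2_eq_square)
  then have "(s-a)/s \<le> (x-1)^2/(2*(x+1)^2)" using sp x
    by (simp add: divide_simps) (simp add: algebra_simps)
  then show "(x-1) * deriv f_SA x - f_SA x \<le> ((x-1) * deriv f_Delta x - f_Delta x) / 4"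
    unfolding gsa gd by simp
qed


lemma xi_sum: "xi_f f n p q = (\<Sum>i<n. q i * ((p i / q i - 1) * deriv f (p i / q i) - f (p i / q i)))"
  if "\<forall>i<n. q i > 0" for f n p q
proof -
  have "xi_f f n p q = (\<Sum>i<n. (p i - q i) * deriv f (p i / q i) - q i * f (p i / q i))"
    unfolding xi_f_def Ef_def Cf_def by (simp add: sum_subtractf)
  also have "... = (\<Sum>i<n. q i * ((p i / q i - 1) * deriv f (p i / q i) - f (p i / q i)))"
  proof (rule sum.cong[OF refl])
    fix i assume "i \<in> {..<n}"
    then have "q i > 0" using that by auto
    then show "(p i - q i) * deriv f (p i / q i) - q i * f (p i / q i) =
        q i * ((p i / q i - 1) * deriv f (p i / q i) - f (p i / q i))"
      by (simp add: field_simps)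
  qed
  finally show ?thesis .
qed

theorem proposition5p2:
  fixes n :: nat and P Q :: "nat \<Rightarrow> real"
  assumes "n \<ge> 2" and "P \<in> Gamma n" and "Q \<in> Gamma n"
  shows "0 \<le> M_SA n P Q \<and> M_SA n P Q \<le> Delta n P Q / 4 \<and>
         0 \<le> xi_SA n P Q \<and> xi_SA n P Q \<le> xi_Delta n P Q / 4"
proof -
  have P: "\<forall>i<n. P i > 0" and Q: "\<forall>i<n. Q i > 0" using assms(2,3) unfolding Gamma_def by auto
  have x: "P i / Q i > 0" if "i < n" for i using P Q that by simp
  have q: "Q i > 0" if "i \<in> {..<n}" for i using Q that by simp
  have xx: "P i / Q i > 0" if "i \<in> {..<n}" for i using x that by simp
  have 1: "0 \<le> M_SA n P Q" unfolding M_SA_def Cf_def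
    by (rule sum_nonneg) (use q xx pointwise(1) in \<open>simp add: less_imp_le\<close>)
  have 2: "M_SA n P Q \<le> Delta n P Q / 4" unfolding M_SA_def Delta_def Cf_def sum_divide_distrib
    by (rule sum_mono) (use q xx pointwise(2) in \<open>auto intro: mult_left_mono[of _ _ "Q _", simplified]\<close>)
  have 3: "0 \<le> xi_SA n P Q" unfolding xi_SA_def xi_sum[OF Q]
    by (rule sum_nonneg) (use q xx pointwise(3) in \<open>simp add: less_imp_le\<close>)
  have 4: "xi_SA n P Q \<le> xi_Delta n P Q / 4" unfolding xi_SA_def xi_Delta_def xi_sum[OF Q] sum_divide_distrib
    by (rule sum_mono) (use q xx pointwise(4) in \<open>auto intro: mult_left_mono[of _ _ "Q _", simplified]\<close>)
  show ?thesis using 1 2 3 4 by blast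
qed

end
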